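(* Let $X$ be a metric space with bounded geometry. The set of ghost operators in the uniform quasi-local algebra $C^*_{uq}(X)$ is a two-sided closed ideal of $C^*_{uq}(X)$.
   Context: Bounded geometry: $\sup_x|B(x,R)|<\infty$ for all $R>0$. For $T\in\mathfrak B(\ell^2(X))$, $T_{x,y}=\langle T\delta_y,\delta_x\rangle$. $T$ is a ghost operator if for every $\varepsilon>0$ there is a bounded $B\subseteq X$ with $|T_{x,y}|<\varepsilon$ for all $x,y\in X\setminus B$. $T$ is quasi-local if for every $\varepsilon>0$ there is $R>0$ such that $\|\chi_AT\chi_B\|\leq\varepsilon$ for all $A,B\subseteq X$ with $d(A,B)\geq R$ ($\chi_A$ = multiplication by the characteristic function). $C^*_{uq}(X)$ is the $C^*$-algebra of all quasi-local operators on $\ell^2(X)$. *)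

theory Defs
  imports "HOL-Analysis.Analysis"
begin

definition l2 :: "('a \<Rightarrow> complex) set" where
  "l2 = {f. (\<lambda>x. (cmod (f x))\<^sup>2) summable_on UNIV}"

definition l2_norm :: "('a \<Rightarrow> complex) \<Rightarrow> real" where
  "l2_norm f = sqrt (infsum (\<lambda>x. (cmod (f x))\<^sup>2) UNIV)"

text \<open>Operators are maps on functions; only their action on l2 matters.\<close>

type_synonym 'a op = "('a \<Rightarrow> complex) \<Rightarrow> ('a \<Rightarrow> complex)"

definition bounded_op :: "'a op \<Rightarrow> bool" where
  "bounded_op T \<longleftrightarrow>
     (\<forall>f\<in>l2. T f \<in> l2) \<and>
     (\<forall>f\<in>l2. \<forall>g\<in>l2. T (\<lambda>x. f x + g x) = (\<lambda>x. T f x + T g x)) \<and>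
     (\<forall>f\<in>l2. \<forall>c. T (\<lambda>x. c * f x) = (\<lambda>x. c * T f x)) \<and>
     (\<exists>C. \<forall>f\<in>l2. l2_norm (T f) \<le> C * l2_norm f)"

definition op_norm :: "'a op \<Rightarrow> real" where
  "op_norm T = Sup {l2_norm (T f) | f. f \<in> l2 \<and> l2_norm f \<le> 1}"

definition delta :: "'a \<Rightarrow> 'a \<Rightarrow> complex" where
  "delta y = (\<lambda>z. if z = y then 1 else 0)"

text \<open>Matrix entry T_{x,y} = <T delta_y, delta_x> = (T delta_y)(x).\<close>
definition entry :: "'a op \<Rightarrow> 'a \<Rightarrow> 'a \<Rightarrow> complex" where
  "entry T x y = T (delta y) x"

definition chi :: "'a set \<Rightarrow> 'a op" where
  "chi A = (\<lambda>f x. if x \<in> A then f x else 0)"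

definition bounded_geometry :: "'a::metric_space itself \<Rightarrow> bool" where
  "bounded_geometry _ \<longleftrightarrow>
     (\<forall>R>0. \<exists>N::nat. \<forall>x::'a. finite (cball x R) \<and> card (cball x R) \<le> N)"

definition ghost_op :: "('a::metric_space) op \<Rightarrow> bool" where
  "ghost_op T \<longleftrightarrow>
     (\<forall>\<epsilon>>0. \<exists>B::'a set. bounded B \<and>
        (\<forall>x y. x \<notin> B \<and> y \<notin> B \<longrightarrow> cmod (entry T x y) < \<epsilon>))"

text \<open>d(A,B) \<ge> R is expressed pointwise (inf of distances, with inf over empty = infinity).\<close>
definition quasi_local :: "('a::metric_space) op \<Rightarrow> bool" where
  "quasi_local T \<longleftrightarrow>
     (\<forall>\<epsilon>>0. \<exists>R>0. \<forall>A B::'a set. (\<forall>a\<in>A. \<forall>b\<in>B. R \<le> dist a b) \<longrightarrow>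
        op_norm (chi A \<circ> T \<circ> chi B) \<le> \<epsilon>)"

definition C_uq :: "('a::metric_space) op set" where
  "C_uq = {T. bounded_op T \<and> quasi_local T}"

definition ghost_ideal :: "('a::metric_space) op set" where
  "ghost_ideal = {T \<in> C_uq. ghost_op T}"

end

theory Submission
  imports Defs
begin

lemma sum_le_infsum_real:
  fixes h :: "'a \<Rightarrow> real"
  assumes "h summable_on UNIV" "\<And>x. h x \<ge> 0" "finite F"
  shows "sum h F \<le> infsum h UNIV"
  using infsum_mono2[of h F UNIV] assms by simp

lemma l2_pt: assumes "f \<in> l2" shows "cmod (f x) \<le> l2_norm f"
proof -
  have "(cmod (f x))\<^sup>2 \<le> infsum (\<lambda>x. (cmod (f x))\<^sup>2) UNIV"
    using sum_le_infsum_real[of "\<lambda>x. (cmod (f x))\<^sup>2" "{x}"] assms by (simp add: l2_def)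
  then show ?thesis unfolding l2_norm_def by (metis norm_ge_zero real_le_rsqrt)
qed

lemma l2_norm_nonneg: "l2_norm f \<ge> 0"
  unfolding l2_norm_def by (simp add: infsum_nonneg)

lemma l2_norm_zero_iff: assumes "f \<in> l2" "l2_norm f = 0" shows "f = (\<lambda>x. 0)"
  using l2_pt[OF assms(1)] assms(2) by (metis norm_le_zero_iff ext)

lemma l2_finite_bound:
  assumes "f \<in> l2" "finite F" shows "L2_set (\<lambda>x. cmod (f x)) F \<le> l2_norm f"
  unfolding L2_set_def l2_norm_def
  using sum_le_infsum_real[of "\<lambda>x. (cmod (f x))\<^sup>2" F] assms by (simp add: l2_def)

lemma l2_tri:
  assumes f: "f \<in> l2" and g: "g \<in> l2" and h: "\<And>x. cmod (h x) \<le> cmod (f x) + cmod (g x)"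
  shows "h \<in> l2 \<and> l2_norm h \<le> l2_norm f + l2_norm g"
proof -
  have fin: "sum (\<lambda>x. (cmod (h x))\<^sup>2) F \<le> (l2_norm f + l2_norm g)\<^sup>2" if "finite F" for F
  proof -
    have "L2_set (\<lambda>x. cmod (h x)) F \<le> L2_set (\<lambda>x. cmod (f x) + cmod (g x)) F"
      by (rule L2_set_mono) (use h in auto)
    also have "\<dots> \<le> L2_set (\<lambda>x. cmod (f x)) F + L2_set (\<lambda>x. cmod (g x)) F"
      by (rule L2_set_triangle_ineq)
    also have "\<dots> \<le> l2_norm f + l2_norm g"
      using l2_finite_bound[OF f that] l2_finite_bound[OF g that] by simp
    finally have "L2_set (\<lambda>x. cmod (h x)) F \<le> l2_norm f + l2_norm g" .
    then have "(L2_set (\<lambda>x. cmod (h x)) F)\<^sup>2 \<le> (l2_norm f + l2_norm g)\<^sup>2"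
      by (simp add: power_mono L2_set_nonneg)
    then show ?thesis unfolding L2_set_def by (simp add: sum_nonneg)
  qed
  have sm: "(\<lambda>x. (cmod (h x))\<^sup>2) summable_on UNIV"
    by (rule nonneg_bdd_above_summable_on) (auto intro!: bdd_aboveI[where M="(l2_norm f + l2_norm g)\<^sup>2"] fin)
  have "infsum (\<lambda>x. (cmod (h x))\<^sup>2) UNIV \<le> (l2_norm f + l2_norm g)\<^sup>2"
    by (rule infsum_le_finite_sums[OF sm]) (use fin in auto)
  then have "l2_norm h \<le> l2_norm f + l2_norm g"
    unfolding l2_norm_def
    by (metis add_nonneg_nonneg l2_norm_nonneg real_le_lsqrt real_sqrt_ge_zero infsum_nonneg zero_le_power2)
  with sm show ?thesis by (simp add: l2_def)
qed

lemma l2_zero: "(\<lambda>x. 0) \<in> l2" and l2_norm_zero: "l2_norm (\<lambda>x. 0) = 0"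
  by (auto simp: l2_def l2_norm_def)

lemma l2_add: "f \<in> l2 \<Longrightarrow> g \<in> l2 \<Longrightarrow> (\<lambda>x. f x + g x) \<in> l2 \<and> l2_norm (\<lambda>x. f x + g x) \<le> l2_norm f + l2_norm g"
  by (rule l2_tri) (auto simp: norm_triangle_ineq)

lemma l2_diff: "f \<in> l2 \<Longrightarrow> g \<in> l2 \<Longrightarrow> (\<lambda>x. f x - g x) \<in> l2 \<and> l2_norm (\<lambda>x. f x - g x) \<le> l2_norm f + l2_norm g"
  by (rule l2_tri) (auto simp: norm_triangle_ineq4)

lemma l2_chi: "f \<in> l2 \<Longrightarrow> chi A f \<in> l2 \<and> l2_norm (chi A f) \<le> l2_norm f"
  using l2_tri[of f "\<lambda>x. 0" "chi A f"] by (auto simp: chi_def l2_zero l2_norm_zero)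

lemma l2_scale: assumes "f \<in> l2" shows "(\<lambda>x. c * f x) \<in> l2 \<and> l2_norm (\<lambda>x. c * f x) = cmod c * l2_norm f"
proof -
  have e: "(\<lambda>x. (cmod (c * f x))\<^sup>2) = (\<lambda>x. (cmod c)\<^sup>2 * (cmod (f x))\<^sup>2)"
    by (simp add: norm_mult power_mult_distrib)
  have s: "(\<lambda>x. (cmod (f x))\<^sup>2) summable_on UNIV" using assms by (simp add: l2_def)
  have s2: "(\<lambda>x. (cmod (c * f x))\<^sup>2) summable_on UNIV"
    unfolding e by (rule summable_on_cmult_right[OF s])
  have i2: "infsum (\<lambda>x. (cmod (c * f x))\<^sup>2) UNIV = (cmod c)\<^sup>2 * infsum (\<lambda>x. (cmod (f x))\<^sup>2) UNIV"
    unfolding e by (rule infsum_cmult_right[OF s])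
  show ?thesis
    unfolding l2_def l2_norm_def using s2 i2
    by (simp add: real_sqrt_mult)
qed

lemma delta_l2: "delta y \<in> l2 \<and> l2_norm (delta y) = 1"
proof -
  have e: "(\<lambda>x. (cmod (delta y x))\<^sup>2) = (\<lambda>x. if x \<in> {y} then 1 else 0)"
    by (auto simp: delta_def)
  have "(\<lambda>x. if x \<in> {y} then (1::real) else 0) summable_on UNIV"
    by (rule summable_on_cong_neutral[where S="{y}" and f="\<lambda>_. 1", THEN iffD1]) auto
  moreover have "infsum (\<lambda>x. if x \<in> {y} then (1::real) else 0) UNIV = 1"
    by (subst infsum_cong_neutral[where S=UNIV and T="{y}" and g="\<lambda>_. 1"]) auto
  ultimately show ?thesis unfolding l2_def l2_norm_def mem_Collect_eq e by simp
qed

definition lb :: "'a op \<Rightarrow> bool" where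
  "lb U \<longleftrightarrow> (\<forall>f\<in>l2. U f \<in> l2) \<and> (\<forall>f\<in>l2. \<forall>c. U (\<lambda>x. c * f x) = (\<lambda>x. c * U f x))
     \<and> (\<exists>C. \<forall>f\<in>l2. l2_norm (U f) \<le> C * l2_norm f)"


lemma lb_mem: "lb U \<Longrightarrow> f \<in> l2 \<Longrightarrow> U f \<in> l2"
  unfolding lb_def by (elim conjE) (erule bspec)

lemma lb_scale: "lb U \<Longrightarrow> f \<in> l2 \<Longrightarrow> U (\<lambda>x. c * f x) = (\<lambda>x. c * U f x)"
  unfolding lb_def by (elim conjE) (drule bspec, assumption, erule spec)

lemma lb_bnd: "lb U \<Longrightarrow> \<exists>C. \<forall>f\<in>l2. l2_norm (U f) \<le> C * l2_norm f"
  unfolding lb_def by (elim conjE)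

lemma lb_C0: assumes "\<forall>f\<in>l2. l2_norm ((U::'a op) f) \<le> C * l2_norm f" shows "C \<ge> 0"
proof -
  have "l2_norm (U (delta undefined)) \<le> C * l2_norm (delta (undefined::'a))"
    by (rule bspec[OF assms delta_l2[THEN conjunct1]])
  then show ?thesis using l2_norm_nonneg[of "U (delta undefined)"] by (simp add: delta_l2)
qed

lemma bounded_lb: assumes "bounded_op T" shows "lb T"
proof -
  show ?thesis using assms unfolding bounded_op_def lb_def by (elim conjE) (intro conjI; assumption)
qed

lemma lb_zero: assumes "lb U" shows "U (\<lambda>x. 0) = (\<lambda>x. 0)"
proof -
  have "U (\<lambda>x. 0 * 0) = (\<lambda>x. 0 * U (\<lambda>x. 0) x)" by (rule lb_scale[OF assms l2_zero])
  then show ?thesis by simp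
qed

lemma lb_chi: assumes "lb U" shows "lb (chi A \<circ> U \<circ> chi B)"
proof -
  from lb_bnd[OF assms(1)] obtain C where C: "\<forall>f\<in>l2. l2_norm (U f) \<le> C * l2_norm f" by (elim exE)
  have C0: "C \<ge> 0" by (rule lb_C0[OF C])
  have bnd: "\<forall>f\<in>l2. l2_norm ((chi A \<circ> U \<circ> chi B) f) \<le> C * l2_norm f"
  proof
    fix f :: "'a \<Rightarrow> complex" assume f: "f \<in> l2"
    have "U (chi B f) \<in> l2" using lb_mem[OF assms] l2_chi[OF f] by simp
    then have "l2_norm ((chi A \<circ> U \<circ> chi B) f) \<le> l2_norm (U (chi B f))"
      using l2_chi[of "U (chi B f)" A] by simp
    also have "\<dots> \<le> C * l2_norm (chi B f)" using bspec[OF C] l2_chi[OF f] by simp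
    also have "\<dots> \<le> C * l2_norm f" using l2_chi[OF f, of B] C0 by (simp add: mult_left_mono)
    finally show "l2_norm ((chi A \<circ> U \<circ> chi B) f) \<le> C * l2_norm f" .
  qed
  have sc: "\<forall>f\<in>l2. \<forall>c. (chi A \<circ> U \<circ> chi B) (\<lambda>x. c * f x) = (\<lambda>x. c * (chi A \<circ> U \<circ> chi B) f x)"
  proof (intro ballI allI)
    fix f :: "'a \<Rightarrow> complex" and c assume f: "f \<in> l2"
    have e1: "chi B (\<lambda>x. c * f x) = (\<lambda>x. c * chi B f x)" by (auto simp: chi_def)
    have e2: "U (\<lambda>x. c * chi B f x) = (\<lambda>x. c * U (chi B f) x)"
      by (rule lb_scale[OF assms l2_chi[OF f, THEN conjunct1]])
    have "(chi A \<circ> U \<circ> chi B) (\<lambda>x. c * f x) = chi A (\<lambda>x. c * U (chi B f) x)"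
      by (simp only: comp_apply e1 e2)
    also have "\<dots> = (\<lambda>x. c * (chi A \<circ> U \<circ> chi B) f x)" by (auto simp: chi_def)
    finally show "(chi A \<circ> U \<circ> chi B) (\<lambda>x. c * f x) = (\<lambda>x. c * (chi A \<circ> U \<circ> chi B) f x)" .
  qed
  have mem: "\<forall>f\<in>l2. (chi A \<circ> U \<circ> chi B) f \<in> l2"
  proof
    fix f :: "'a \<Rightarrow> complex" assume f: "f \<in> l2"
    have "U (chi B f) \<in> l2" using lb_mem[OF assms] l2_chi[OF f, of B] by simp
    then show "(chi A \<circ> U \<circ> chi B) f \<in> l2" using l2_chi by auto
  qed
  show ?thesis unfolding lb_def
    apply (intro conjI)
      apply (fact mem)
     apply (fact sc)
    apply (rule exI[of _ C], fact bnd)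
    done
qed

lemma op_norm_ub: assumes "lb U" "f \<in> l2" "l2_norm f \<le> 1"
  shows "l2_norm (U f) \<le> op_norm U"
proof -
  from lb_bnd[OF assms(1)] obtain C where C: "\<forall>f\<in>l2. l2_norm (U f) \<le> C * l2_norm f" by (elim exE)
  have C0: "C \<ge> 0" by (rule lb_C0[OF C])
  have "bdd_above {l2_norm (U f) | f. f \<in> l2 \<and> l2_norm f \<le> 1}"
  proof (rule bdd_aboveI[where M=C], clarify)
    fix g :: "'a \<Rightarrow> complex" assume "g \<in> l2" "l2_norm g \<le> 1"
    then show "l2_norm (U g) \<le> C" using C C0
      by (meson mult_left_le order.trans)
  qed
  moreover have "l2_norm (U f) \<in> {l2_norm (U f) | f. f \<in> l2 \<and> l2_norm f \<le> 1}" using assms by blast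
  ultimately show ?thesis unfolding op_norm_def by (simp add: cSup_upper)
qed

lemma op_norm_nonneg: assumes "lb U" shows "0 \<le> op_norm U"
proof -
  have "l2_norm (U (\<lambda>x. 0)) \<le> op_norm U" by (rule op_norm_ub[OF assms l2_zero]) (simp only: l2_norm_zero zero_le_one)
  then show ?thesis using l2_norm_nonneg[of "U (\<lambda>x. 0)"] by linarith
qed

lemma op_norm_bound: assumes "lb U" "f \<in> l2"
  shows "l2_norm (U f) \<le> op_norm U * l2_norm f"
proof (cases "l2_norm f = 0")
  case True
  then have "f = (\<lambda>x. 0)" using l2_norm_zero_iff assms by blast
  then have "U f = (\<lambda>x. 0)" using lb_zero[OF assms(1)] by simp
  then show ?thesis using True by (simp only: l2_norm_zero mult_zero_right order_refl)
next
  case False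
  define n where "n = l2_norm f"
  have n: "n > 0" using False l2_norm_nonneg n_def by (metis less_eq_real_def)
  define c where "c = complex_of_real (1/n)"
  have cn: "cmod c = 1/n" unfolding c_def norm_of_real using n by simp
  have g: "(\<lambda>x. c * f x) \<in> l2" "l2_norm (\<lambda>x. c * f x) = 1"
    using l2_scale[OF assms(2), of c] cn n n_def by auto
  have "l2_norm (U (\<lambda>x. c * f x)) \<le> op_norm U" by (rule op_norm_ub[OF assms(1) g(1)]) (simp add: g(2))
  moreover have "U (\<lambda>x. c * f x) = (\<lambda>x. c * U f x)" by (rule lb_scale[OF assms])
  moreover have "l2_norm (\<lambda>x. c * U f x) = (1/n) * l2_norm (U f)"
    using l2_scale[OF lb_mem[OF assms], of c] cn by simp
  ultimately have "(1/n) * l2_norm (U f) \<le> op_norm U" by simp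
  then show ?thesis using n n_def by (simp add: field_simps)
qed

lemma op_norm_le: assumes "0 \<le> C" "\<And>f. f \<in> l2 \<Longrightarrow> l2_norm f \<le> 1 \<Longrightarrow> l2_norm (U f) \<le> C"
  shows "op_norm U \<le> C"
proof -
  have z: "(\<lambda>x. 0) \<in> l2 \<and> l2_norm (\<lambda>x::'a. 0::complex) \<le> 1" by (simp only: l2_zero l2_norm_zero zero_le_one simp_thms)
  show ?thesis unfolding op_norm_def
  proof (rule cSup_least)
    show "{l2_norm (U f) |f. f \<in> l2 \<and> l2_norm f \<le> 1} \<noteq> {}" using z by blast
    fix t assume "t \<in> {l2_norm (U f) |f. f \<in> l2 \<and> l2_norm f \<le> 1}"
    then obtain f where "t = l2_norm (U f)" "f \<in> l2" "l2_norm f \<le> 1" by blast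
    then show "t \<le> C" using assms(2) by simp
  qed
qed

lemma entry_bound: assumes "lb U" shows "cmod (entry U x y) \<le> op_norm U"
proof -
  have "U (delta y) \<in> l2" by (rule lb_mem[OF assms delta_l2[THEN conjunct1]])
  then have "cmod (entry U x y) \<le> l2_norm (U (delta y))"
    unfolding entry_def by (rule l2_pt)
  also have "\<dots> \<le> op_norm U" by (rule op_norm_ub[OF assms]) (simp_all add: delta_l2)
  finally show ?thesis .
qed

lemma bo_add_apply: "bounded_op T \<Longrightarrow> f \<in> l2 \<Longrightarrow> g \<in> l2 \<Longrightarrow> T (\<lambda>x. f x + g x) = (\<lambda>x. T f x + T g x)"
  unfolding bounded_op_def by (elim conjE) (drule bspec, assumption, drule bspec, assumption, assumption)

lemma bo_intro:
  assumes "\<And>f. f \<in> l2 \<Longrightarrow> T f \<in> l2"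
    "\<And>f g. f \<in> l2 \<Longrightarrow> g \<in> l2 \<Longrightarrow> T (\<lambda>x. f x + g x) = (\<lambda>x. T f x + T g x)"
    "\<And>f c. f \<in> l2 \<Longrightarrow> T (\<lambda>x. c * f x) = (\<lambda>x. c * T f x)"
    "\<And>f. f \<in> l2 \<Longrightarrow> l2_norm (T f) \<le> C * l2_norm f"
  shows "bounded_op T"
  unfolding bounded_op_def
  apply (intro conjI ballI allI)
     apply (erule assms(1))
    apply (erule assms(2), assumption)
   apply (erule assms(3))
  apply (rule exI[of _ C])
  apply (intro ballI)
  apply (erule assms(4))
  done

lemma bo_zero: "bounded_op (\<lambda>f x. 0)"
  by (rule bo_intro[where C=0]) (simp_all add: l2_zero l2_norm_zero)

lemma bo_add: assumes S: "bounded_op S" and T: "bounded_op T"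
  shows "bounded_op (\<lambda>f x. S f x + T f x)"
proof (rule bo_intro[where C="op_norm S + op_norm T"])
  fix f :: "'a \<Rightarrow> complex" assume f: "f \<in> l2"
  have Sf: "S f \<in> l2" and Tf: "T f \<in> l2" using lb_mem[OF bounded_lb[OF S] f] lb_mem[OF bounded_lb[OF T] f] .
  show "(\<lambda>x. S f x + T f x) \<in> l2" using l2_add[OF Sf Tf] by simp
  have "l2_norm (\<lambda>x. S f x + T f x) \<le> l2_norm (S f) + l2_norm (T f)" using l2_add[OF Sf Tf] by simp
  also have "\<dots> \<le> op_norm S * l2_norm f + op_norm T * l2_norm f"
    using op_norm_bound[OF bounded_lb[OF S] f] op_norm_bound[OF bounded_lb[OF T] f] by simp
  finally show "l2_norm (\<lambda>x. S f x + T f x) \<le> (op_norm S + op_norm T) * l2_norm f"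
    by (simp add: algebra_simps)
next
  fix f g :: "'a \<Rightarrow> complex" assume f: "f \<in> l2" and g: "g \<in> l2"
  show "(\<lambda>x. S (\<lambda>x. f x + g x) x + T (\<lambda>x. f x + g x) x) =
          (\<lambda>x. S f x + T f x + (S g x + T g x))"
    using bo_add_apply[OF S f g] bo_add_apply[OF T f g] by (simp add: algebra_simps)
next
  fix f :: "'a \<Rightarrow> complex" and c assume f: "f \<in> l2"
  show "(\<lambda>x. S (\<lambda>x. c * f x) x + T (\<lambda>x. c * f x) x) = (\<lambda>x. c * (S f x + T f x))"
    using lb_scale[OF bounded_lb[OF S] f, of c] lb_scale[OF bounded_lb[OF T] f, of c]
    by (simp add: algebra_simps)
qed

lemma bo_scale: assumes T: "bounded_op T"
  shows "bounded_op (\<lambda>f x. c * T f x)"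
proof (rule bo_intro[where C="cmod c * op_norm T"])
  fix f :: "'a \<Rightarrow> complex" assume f: "f \<in> l2"
  have Tf: "T f \<in> l2" using lb_mem[OF bounded_lb[OF T] f] .
  show "(\<lambda>x. c * T f x) \<in> l2" using l2_scale[OF Tf] by simp
  have "l2_norm (\<lambda>x. c * T f x) = cmod c * l2_norm (T f)" using l2_scale[OF Tf] by simp
  also have "\<dots> \<le> cmod c * (op_norm T * l2_norm f)"
    using op_norm_bound[OF bounded_lb[OF T] f] by (simp add: mult_left_mono)
  finally show "l2_norm (\<lambda>x. c * T f x) \<le> cmod c * op_norm T * l2_norm f"
    by (simp add: algebra_simps)
next
  fix f g :: "'a \<Rightarrow> complex" assume f: "f \<in> l2" and g: "g \<in> l2"
  show "(\<lambda>x. c * T (\<lambda>x. f x + g x) x) = (\<lambda>x. c * T f x + c * T g x)"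
    using bo_add_apply[OF T f g] by (simp add: algebra_simps)
next
  fix f :: "'a \<Rightarrow> complex" and d assume f: "f \<in> l2"
  show "(\<lambda>x. c * T (\<lambda>x. d * f x) x) = (\<lambda>x. d * (c * T f x))"
    using lb_scale[OF bounded_lb[OF T] f, of d] by (simp add: algebra_simps)
qed

lemma bo_comp: assumes S: "bounded_op S" and T: "bounded_op T"
  shows "bounded_op (S \<circ> T)"
proof (rule bo_intro[where C="op_norm S * op_norm T"])
  fix f :: "'a \<Rightarrow> complex" assume f: "f \<in> l2"
  have Tf: "T f \<in> l2" using lb_mem[OF bounded_lb[OF T] f] .
  show "(S \<circ> T) f \<in> l2" using lb_mem[OF bounded_lb[OF S] Tf] by simp
  have "l2_norm ((S \<circ> T) f) \<le> op_norm S * l2_norm (T f)" using op_norm_bound[OF bounded_lb[OF S] Tf] by simp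
  also have "\<dots> \<le> op_norm S * (op_norm T * l2_norm f)"
    using op_norm_bound[OF bounded_lb[OF T] f] op_norm_nonneg[OF bounded_lb[OF S]] by (simp add: mult_left_mono)
  finally show "l2_norm ((S \<circ> T) f) \<le> op_norm S * op_norm T * l2_norm f"
    by (simp add: algebra_simps)
next
  fix f g :: "'a \<Rightarrow> complex" assume f: "f \<in> l2" and g: "g \<in> l2"
  show "(S \<circ> T) (\<lambda>x. f x + g x) = (\<lambda>x. (S \<circ> T) f x + (S \<circ> T) g x)"
    using bo_add_apply[OF T f g] bo_add_apply[OF S lb_mem[OF bounded_lb[OF T] f] lb_mem[OF bounded_lb[OF T] g]]
    by simp
next
  fix f :: "'a \<Rightarrow> complex" and d assume f: "f \<in> l2"
  show "(S \<circ> T) (\<lambda>x. d * f x) = (\<lambda>x. d * (S \<circ> T) f x)"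
    using lb_scale[OF bounded_lb[OF T] f, of d] lb_scale[OF bounded_lb[OF S] lb_mem[OF bounded_lb[OF T] f], of d] by simp
qed

lemma qlD: assumes "quasi_local T" "\<epsilon> > 0"
  obtains R where "R > 0" "\<And>A B. (\<forall>a\<in>A. \<forall>b\<in>B. R \<le> dist a b) \<Longrightarrow> op_norm (chi A \<circ> T \<circ> chi B) \<le> \<epsilon>"
  using assms unfolding quasi_local_def by blast

lemma qlI: assumes "\<And>\<epsilon>. \<epsilon> > 0 \<Longrightarrow> \<exists>R>0. \<forall>A B. (\<forall>a\<in>A. \<forall>b\<in>B. R \<le> dist a b) \<longrightarrow> op_norm (chi A \<circ> T \<circ> chi B) \<le> \<epsilon>"
  shows "quasi_local T"
  unfolding quasi_local_def using assms by blast

lemma ql_zero: "quasi_local (\<lambda>f (x::'a::metric_space). 0)"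
proof (rule qlI)
  fix \<epsilon> :: real assume e: "\<epsilon> > 0"
  have "op_norm (chi A \<circ> (\<lambda>f (x::'a). 0) \<circ> chi B) \<le> \<epsilon>" for A B
    by (rule op_norm_le) (use e in \<open>simp_all add: chi_def l2_norm_zero\<close>)
  then show "\<exists>R>0. \<forall>A B. (\<forall>a\<in>A. \<forall>b\<in>B. R \<le> dist a b) \<longrightarrow> op_norm (chi A \<circ> (\<lambda>f (x::'a). 0) \<circ> chi B) \<le> \<epsilon>"
    by (intro exI[of _ 1]) simp
qed

lemma ql_add: assumes S: "bounded_op S" "quasi_local S" and T: "bounded_op T" "quasi_local T"
  shows "quasi_local (\<lambda>f x. S f x + T f x)"
proof (rule qlI)
  fix \<epsilon> :: real assume e: "\<epsilon> > 0"
  obtain R1 where R1: "R1 > 0" "\<And>A B. (\<forall>a\<in>A. \<forall>b\<in>B. R1 \<le> dist a b) \<Longrightarrow> op_norm (chi A \<circ> S \<circ> chi B) \<le> \<epsilon>/2"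
    using qlD[OF S(2), of "\<epsilon>/2"] e by auto
  obtain R2 where R2: "R2 > 0" "\<And>A B. (\<forall>a\<in>A. \<forall>b\<in>B. R2 \<le> dist a b) \<Longrightarrow> op_norm (chi A \<circ> T \<circ> chi B) \<le> \<epsilon>/2"
    using qlD[OF T(2), of "\<epsilon>/2"] e by auto
  have "op_norm (chi A \<circ> (\<lambda>f x. S f x + T f x) \<circ> chi B) \<le> \<epsilon>"
    if AB: "\<forall>a\<in>A. \<forall>b\<in>B. max R1 R2 \<le> dist a b" for A B
  proof (rule op_norm_le)
    show "0 \<le> \<epsilon>" using e by simp
    have n1: "op_norm (chi A \<circ> S \<circ> chi B) \<le> \<epsilon>/2" using R1(2) AB by simp
    have n2: "op_norm (chi A \<circ> T \<circ> chi B) \<le> \<epsilon>/2" using R2(2) AB by simp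
    fix f :: "'a \<Rightarrow> complex" assume f: "f \<in> l2" "l2_norm f \<le> 1"
    have eq: "(chi A \<circ> (\<lambda>f x. S f x + T f x) \<circ> chi B) f = (\<lambda>x. (chi A \<circ> S \<circ> chi B) f x + (chi A \<circ> T \<circ> chi B) f x)"
      by (simp add: chi_def fun_eq_iff)
    have m1: "(chi A \<circ> S \<circ> chi B) f \<in> l2" by (rule lb_mem[OF lb_chi[OF bounded_lb[OF S(1)]] f(1)])
    have m2: "(chi A \<circ> T \<circ> chi B) f \<in> l2" by (rule lb_mem[OF lb_chi[OF bounded_lb[OF T(1)]] f(1)])
    have "l2_norm ((chi A \<circ> (\<lambda>f x. S f x + T f x) \<circ> chi B) f) \<le> l2_norm ((chi A \<circ> S \<circ> chi B) f) + l2_norm ((chi A \<circ> T \<circ> chi B) f)"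
      unfolding eq using l2_add[OF m1 m2] by simp
    also have "\<dots> \<le> op_norm (chi A \<circ> S \<circ> chi B) + op_norm (chi A \<circ> T \<circ> chi B)"
      by (rule add_mono[OF op_norm_ub[OF lb_chi[OF bounded_lb[OF S(1)]] f] op_norm_ub[OF lb_chi[OF bounded_lb[OF T(1)]] f]])
    also have "\<dots> \<le> \<epsilon>" using n1 n2 by simp
    finally show "l2_norm ((chi A \<circ> (\<lambda>f x. S f x + T f x) \<circ> chi B) f) \<le> \<epsilon>" .
  qed
  then show "\<exists>R>0. \<forall>A B. (\<forall>a\<in>A. \<forall>b\<in>B. R \<le> dist a b) \<longrightarrow> op_norm (chi A \<circ> (\<lambda>f x. S f x + T f x) \<circ> chi B) \<le> \<epsilon>"
    using R1(1) by (intro exI[of _ "max R1 R2"]) auto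
qed

lemma ql_scale: assumes T: "bounded_op T" "quasi_local T"
  shows "quasi_local (\<lambda>f x. c * T f x)"
proof (rule qlI)
  fix \<epsilon> :: real assume e: "\<epsilon> > 0"
  define e1 where "e1 = \<epsilon> / (cmod c + 1)"
  have e1a: "e1 > 0" using e unfolding e1_def by (intro divide_pos_pos) (simp_all add: add_nonneg_pos)
  have "cmod c * e1 = \<epsilon> * (cmod c / (cmod c + 1))" by (simp add: e1_def)
  also have "\<dots> \<le> \<epsilon> * 1" using e by (intro mult_left_mono) (simp_all add: divide_le_eq_1 add_nonneg_pos)
  finally have e1: "e1 > 0" "cmod c * e1 \<le> \<epsilon>" using e1a by simp_all
  obtain R1 where R1: "R1 > 0" "\<And>A B. (\<forall>a\<in>A. \<forall>b\<in>B. R1 \<le> dist a b) \<Longrightarrow> op_norm (chi A \<circ> T \<circ> chi B) \<le> e1"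
    using qlD[OF T(2) e1(1)] by auto
  have "op_norm (chi A \<circ> (\<lambda>f x. c * T f x) \<circ> chi B) \<le> \<epsilon>"
    if AB: "\<forall>a\<in>A. \<forall>b\<in>B. R1 \<le> dist a b" for A B
  proof (rule op_norm_le)
    show "0 \<le> \<epsilon>" using e by simp
    have n1: "op_norm (chi A \<circ> T \<circ> chi B) \<le> e1" using R1(2) AB by simp
    fix f :: "'a \<Rightarrow> complex" assume f: "f \<in> l2" "l2_norm f \<le> 1"
    have eq: "(chi A \<circ> (\<lambda>f x. c * T f x) \<circ> chi B) f = (\<lambda>x. c * (chi A \<circ> T \<circ> chi B) f x)"
      by (simp add: chi_def fun_eq_iff)
    have m1: "(chi A \<circ> T \<circ> chi B) f \<in> l2" by (rule lb_mem[OF lb_chi[OF bounded_lb[OF T(1)]] f(1)])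
    have "l2_norm ((chi A \<circ> (\<lambda>f x. c * T f x) \<circ> chi B) f) = cmod c * l2_norm ((chi A \<circ> T \<circ> chi B) f)"
      unfolding eq using l2_scale[OF m1] by simp
    also have "\<dots> \<le> cmod c * e1"
      by (rule mult_left_mono[OF order.trans[OF op_norm_ub[OF lb_chi[OF bounded_lb[OF T(1)]] f] n1]]) simp
    also have "\<dots> \<le> \<epsilon>" using e1 by simp
    finally show "l2_norm ((chi A \<circ> (\<lambda>f x. c * T f x) \<circ> chi B) f) \<le> \<epsilon>" .
  qed
  then show "\<exists>R>0. \<forall>A B. (\<forall>a\<in>A. \<forall>b\<in>B. R \<le> dist a b) \<longrightarrow> op_norm (chi A \<circ> (\<lambda>f x. c * T f x) \<circ> chi B) \<le> \<epsilon>"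
    using R1(1) by (intro exI[of _ R1]) auto
qed

lemma ql_comp: assumes S: "bounded_op S" "quasi_local S" and T: "bounded_op T" "quasi_local T"
  shows "quasi_local (S \<circ> T)"
proof (rule qlI)
  fix \<epsilon> :: real assume e: "\<epsilon> > 0"
  have S0: "op_norm S \<ge> 0" and T0: "op_norm T \<ge> 0"
    using op_norm_nonneg[OF bounded_lb[OF S(1)]] op_norm_nonneg[OF bounded_lb[OF T(1)]] .
  define e1 where "e1 = \<epsilon> / (op_norm S + op_norm T + 1)"
  have e1: "e1 > 0" using e S0 T0 unfolding e1_def by (intro divide_pos_pos) simp_all
  have "op_norm S * e1 + e1 * op_norm T = \<epsilon> * ((op_norm S + op_norm T) / (op_norm S + op_norm T + 1))"
    by (simp add: e1_def add_divide_distrib[symmetric] algebra_simps)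
  also have "\<dots> \<le> \<epsilon> * 1" using e S0 T0 by (intro mult_left_mono) (simp_all add: divide_le_eq_1)
  finally have e1s: "op_norm S * e1 + e1 * op_norm T \<le> \<epsilon>" by simp
  obtain R1 where R1: "R1 > 0" "\<And>A B. (\<forall>a\<in>A. \<forall>b\<in>B. R1 \<le> dist a b) \<Longrightarrow> op_norm (chi A \<circ> S \<circ> chi B) \<le> e1"
    using qlD[OF S(2) e1] by auto
  obtain R2 where R2: "R2 > 0" "\<And>A B. (\<forall>a\<in>A. \<forall>b\<in>B. R2 \<le> dist a b) \<Longrightarrow> op_norm (chi A \<circ> T \<circ> chi B) \<le> e1"
    using qlD[OF T(2) e1] by auto
  have "op_norm (chi A \<circ> (S \<circ> T) \<circ> chi B) \<le> \<epsilon>"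
    if AB: "\<forall>a\<in>A. \<forall>b\<in>B. R1 + R2 \<le> dist a b" for A B
  proof (rule op_norm_le)
    show "0 \<le> \<epsilon>" using e by simp
    define C where "C = {z. \<exists>a\<in>A. dist a z < R1}"
    have CB: "\<forall>z\<in>C. \<forall>b\<in>B. R2 \<le> dist z b"
    proof (intro ballI)
      fix z b assume z: "z \<in> C" and b: "b \<in> B"
      then obtain a where a: "a \<in> A" "dist a z < R1" unfolding C_def by blast
      have "R1 + R2 \<le> dist a b" using AB a b by blast
      moreover have "dist a b \<le> dist a z + dist z b" by (rule dist_triangle)
      ultimately show "R2 \<le> dist z b" using a by linarith
    qed
    have AC: "\<forall>a\<in>A. \<forall>z\<in>-C. R1 \<le> dist a z"
      unfolding C_def by (auto simp: not_less)
    have n1: "op_norm (chi C \<circ> T \<circ> chi B) \<le> e1" using R2(2)[OF CB] .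
    have n2: "op_norm (chi A \<circ> S \<circ> chi (-C)) \<le> e1" using R1(2)[OF AC] .
    fix f :: "'a \<Rightarrow> complex" assume f: "f \<in> l2" "l2_norm f \<le> 1"
    define h where "h = T (chi B f)"
    have cBf: "chi B f \<in> l2" using l2_chi[OF f(1)] by simp
    have h: "h \<in> l2" unfolding h_def by (rule lb_mem[OF bounded_lb[OF T(1)] cBf])
    have hC: "chi C h \<in> l2" and hC': "chi (-C) h \<in> l2" using l2_chi[OF h] by simp_all
    have hsplit: "h = (\<lambda>x. chi C h x + chi (-C) h x)" by (simp add: chi_def fun_eq_iff)
    have "S h = (\<lambda>x. S (chi C h) x + S (chi (-C) h) x)"
      by (subst hsplit) (rule bo_add_apply[OF S(1) hC hC'])
    then have eq: "(chi A \<circ> (S \<circ> T) \<circ> chi B) f = (\<lambda>x. chi A (S (chi C h)) x + (chi A \<circ> S \<circ> chi (-C)) h x)"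
      unfolding h_def by (simp add: chi_def fun_eq_iff)
    have m1: "chi A (S (chi C h)) \<in> l2" using l2_chi[OF lb_mem[OF bounded_lb[OF S(1)] hC]] by simp
    have m2: "(chi A \<circ> S \<circ> chi (-C)) h \<in> l2" by (rule lb_mem[OF lb_chi[OF bounded_lb[OF S(1)]] h])
    have "l2_norm ((chi A \<circ> (S \<circ> T) \<circ> chi B) f) \<le> l2_norm (chi A (S (chi C h))) + l2_norm ((chi A \<circ> S \<circ> chi (-C)) h)"
      unfolding eq using l2_add[OF m1 m2] by simp
    also have "\<dots> \<le> op_norm S * e1 + e1 * op_norm T"
    proof (rule add_mono)
      have "l2_norm (chi C h) = l2_norm ((chi C \<circ> T \<circ> chi B) f)" unfolding h_def by simp
      also have "\<dots> \<le> op_norm (chi C \<circ> T \<circ> chi B)" by (rule op_norm_ub[OF lb_chi[OF bounded_lb[OF T(1)]] f])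
      finally have hCn: "l2_norm (chi C h) \<le> e1" using n1 by simp
      have "l2_norm (chi A (S (chi C h))) \<le> l2_norm (S (chi C h))"
        using l2_chi[OF lb_mem[OF bounded_lb[OF S(1)] hC]] by simp
      also have "\<dots> \<le> op_norm S * l2_norm (chi C h)" by (rule op_norm_bound[OF bounded_lb[OF S(1)] hC])
      also have "\<dots> \<le> op_norm S * e1" by (rule mult_left_mono[OF hCn S0])
      finally show "l2_norm (chi A (S (chi C h))) \<le> op_norm S * e1" .
    next
      have "l2_norm h \<le> op_norm T * l2_norm (chi B f)" unfolding h_def by (rule op_norm_bound[OF bounded_lb[OF T(1)] cBf])
      also have "\<dots> \<le> op_norm T * 1"
        using l2_chi[OF f(1), of B] f(2) by (intro mult_left_mono[OF _ T0]) simp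
      finally have hn: "l2_norm h \<le> op_norm T" by simp
      have "l2_norm ((chi A \<circ> S \<circ> chi (-C)) h) \<le> op_norm (chi A \<circ> S \<circ> chi (-C)) * l2_norm h"
        by (rule op_norm_bound[OF lb_chi[OF bounded_lb[OF S(1)]] h])
      also have "\<dots> \<le> e1 * op_norm T"
        by (rule mult_mono[OF n2 hn]) (simp_all add: e1 less_imp_le l2_norm_nonneg)
      finally show "l2_norm ((chi A \<circ> S \<circ> chi (-C)) h) \<le> e1 * op_norm T" .
    qed
    also have "\<dots> \<le> \<epsilon>" by (rule e1s)
    finally show "l2_norm ((chi A \<circ> (S \<circ> T) \<circ> chi B) f) \<le> \<epsilon>" .
  qed
  then show "\<exists>R>0. \<forall>A B. (\<forall>a\<in>A. \<forall>b\<in>B. R \<le> dist a b) \<longrightarrow> op_norm (chi A \<circ> (S \<circ> T) \<circ> chi B) \<le> \<epsilon>"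
    using R1(1) R2(1) by (intro exI[of _ "R1 + R2"]) auto
qed

lemma ghostD: assumes "ghost_op T" "\<epsilon> > 0"
  obtains B where "bounded B" "\<And>x y. x \<notin> B \<Longrightarrow> y \<notin> B \<Longrightarrow> cmod (entry T x y) < \<epsilon>"
proof -
  from assms(1)[unfolded ghost_op_def, rule_format, OF assms(2)] obtain B where
    "bounded B" "\<forall>x y. x \<notin> B \<and> y \<notin> B \<longrightarrow> cmod (entry T x y) < \<epsilon>" by (elim exE conjE)
  then show ?thesis using that by blast
qed

lemma ghostI: assumes "\<And>\<epsilon>. \<epsilon> > 0 \<Longrightarrow> \<exists>B. bounded B \<and> (\<forall>x y. x \<notin> B \<and> y \<notin> B \<longrightarrow> cmod (entry T x y) < \<epsilon>)"
  shows "ghost_op T"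
  unfolding ghost_op_def using assms by (intro allI impI)

lemma ghost_zero: "ghost_op (\<lambda>f (x::'a::metric_space). 0)"
  by (rule ghostI) (auto simp: entry_def intro!: exI[of _ "{}"])

lemma ghost_add: assumes "ghost_op S" "ghost_op T" shows "ghost_op (\<lambda>f x. S f x + T f x)"
proof (rule ghostI)
  fix \<epsilon> :: real assume e: "\<epsilon> > 0"
  obtain B1 where B1: "bounded B1" "\<And>x y. x \<notin> B1 \<Longrightarrow> y \<notin> B1 \<Longrightarrow> cmod (entry S x y) < \<epsilon>/2"
    using ghostD[OF assms(1), of "\<epsilon>/2"] e by auto
  obtain B2 where B2: "bounded B2" "\<And>x y. x \<notin> B2 \<Longrightarrow> y \<notin> B2 \<Longrightarrow> cmod (entry T x y) < \<epsilon>/2"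
    using ghostD[OF assms(2), of "\<epsilon>/2"] e by auto
  have "cmod (entry (\<lambda>f x. S f x + T f x) x y) < \<epsilon>" if "x \<notin> B1 \<union> B2" "y \<notin> B1 \<union> B2" for x y
  proof -
    have "cmod (entry (\<lambda>f x. S f x + T f x) x y) \<le> cmod (entry S x y) + cmod (entry T x y)"
      unfolding entry_def by (rule norm_triangle_ineq)
    also have "\<dots> < \<epsilon>/2 + \<epsilon>/2" using B1(2) B2(2) that by (intro add_strict_mono) auto
    finally show ?thesis by simp
  qed
  then show "\<exists>B. bounded B \<and> (\<forall>x y. x \<notin> B \<and> y \<notin> B \<longrightarrow> cmod (entry (\<lambda>f x. S f x + T f x) x y) < \<epsilon>)"
    using B1(1) B2(1) by (intro exI[of _ "B1 \<union> B2"]) auto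
qed

lemma ghost_scale: assumes "ghost_op T" shows "ghost_op (\<lambda>f x. c * T f x)"
proof (rule ghostI)
  fix \<epsilon> :: real assume e: "\<epsilon> > 0"
  have e1: "\<epsilon> / (cmod c + 1) > 0" using e by (intro divide_pos_pos) (simp_all add: add_nonneg_pos)
  obtain B where B: "bounded B" "\<And>x y. x \<notin> B \<Longrightarrow> y \<notin> B \<Longrightarrow> cmod (entry T x y) < \<epsilon> / (cmod c + 1)"
    using ghostD[OF assms e1] by auto
  have "cmod (entry (\<lambda>f x. c * T f x) x y) < \<epsilon>" if "x \<notin> B" "y \<notin> B" for x y
  proof -
    have "cmod (entry (\<lambda>f x. c * T f x) x y) = cmod c * cmod (entry T x y)"
      unfolding entry_def by (simp add: norm_mult)
    also have "\<dots> \<le> cmod c * (\<epsilon> / (cmod c + 1))" using B(2)[OF that] by (intro mult_left_mono) simp_all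
    also have "\<dots> = \<epsilon> * (cmod c / (cmod c + 1))" by simp
    also have "\<dots> < \<epsilon> * 1" using e by (intro mult_strict_left_mono) (simp_all add: add_nonneg_pos)
    finally show ?thesis by simp
  qed
  then show "\<exists>B. bounded B \<and> (\<forall>x y. x \<notin> B \<and> y \<notin> B \<longrightarrow> cmod (entry (\<lambda>f x. c * T f x) x y) < \<epsilon>)"
    using B(1) by (intro exI[of _ B]) auto
qed

lemma bo_diff_eq: "(\<lambda>f x. (T::'a op) f x - (S::'a op) f x) = (\<lambda>f x. T f x + (\<lambda>f x. (-1) * S f x) f x)"
  by (intro ext) simp

lemma ghost_closed: assumes T: "bounded_op T"
  and approx: "\<forall>\<epsilon>>0. \<exists>S\<in>ghost_ideal. op_norm (\<lambda>f x. T f x - S f x) < \<epsilon>"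
  shows "ghost_op T"
proof (rule ghostI)
  fix \<epsilon> :: real assume e: "\<epsilon> > 0"
  have e2: "\<epsilon>/2 > 0" using e by simp
  from approx[rule_format, OF e2] obtain S where S: "S \<in> ghost_ideal" "op_norm (\<lambda>f x. T f x - S f x) < \<epsilon>/2"
    by (elim bexE)
  have Sb: "bounded_op S" and Sg: "ghost_op S" using S(1) unfolding ghost_ideal_def C_uq_def by auto
  obtain B where B: "bounded B" "\<And>x y. x \<notin> B \<Longrightarrow> y \<notin> B \<Longrightarrow> cmod (entry S x y) < \<epsilon>/2"
    using ghostD[OF Sg, of "\<epsilon>/2"] e by auto
  have lbD: "lb (\<lambda>f x. T f x - S f x)"
    unfolding bo_diff_eq by (rule bounded_lb[OF bo_add[OF T bo_scale[OF Sb]]])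
  have "cmod (entry T x y) < \<epsilon>" if "x \<notin> B" "y \<notin> B" for x y
  proof -
    have "entry T x y = entry (\<lambda>f x. T f x - S f x) x y + entry S x y" unfolding entry_def by simp
    then have "cmod (entry T x y) \<le> cmod (entry (\<lambda>f x. T f x - S f x) x y) + cmod (entry S x y)"
      by (metis norm_triangle_ineq)
    also have "\<dots> < \<epsilon>/2 + \<epsilon>/2"
      using entry_bound[OF lbD, of x y] S(2) B(2)[OF that] by (intro add_le_less_mono) simp_all
    finally show ?thesis by simp
  qed
  then show "\<exists>B. bounded B \<and> (\<forall>x y. x \<notin> B \<and> y \<notin> B \<longrightarrow> cmod (entry T x y) < \<epsilon>)"
    using B(1) by (intro exI[of _ B]) auto
qed

lemma bo_sum: assumes S: "bounded_op S" and F: "finite F"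
  shows "(\<forall>z\<in>F. h z \<in> l2) \<Longrightarrow> (\<lambda>w. \<Sum>z\<in>F. h z w) \<in> l2 \<and> S (\<lambda>w. \<Sum>z\<in>F. h z w) = (\<lambda>w. \<Sum>z\<in>F. S (h z) w)"
  using F
proof (induction F rule: finite_induct)
  case empty
  then show ?case by (simp add: l2_zero lb_zero[OF bounded_lb[OF S]])
next
  case (insert a F)
  have IH: "(\<lambda>w. \<Sum>z\<in>F. h z w) \<in> l2" "S (\<lambda>w. \<Sum>z\<in>F. h z w) = (\<lambda>w. \<Sum>z\<in>F. S (h z) w)"
    using insert by auto
  have ha: "h a \<in> l2" using insert by auto
  have eq: "(\<lambda>w. \<Sum>z\<in>insert a F. h z w) = (\<lambda>w. h a w + (\<lambda>w. \<Sum>z\<in>F. h z w) w)"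
    using insert by simp
  show ?case unfolding eq
    using l2_add[OF ha IH(1)] bo_add_apply[OF S ha IH(1)] IH(2) insert by simp
qed

lemma chi_decomp: assumes "finite C" shows "chi C g = (\<lambda>w. \<Sum>z\<in>C. (\<lambda>w. g z * delta z w) w)"
proof (rule ext)
  fix w
  have "(\<Sum>z\<in>C. g z * delta z w) = (\<Sum>z\<in>C. if w = z then g z else 0)"
    by (rule sum.cong) (auto simp: delta_def)
  also have "\<dots> = chi C g w" using assms by (simp add: chi_def)
  finally show "chi C g w = (\<Sum>z\<in>C. (\<lambda>w. g z * delta z w) w)" by simp
qed

lemma entry_sum: assumes U: "bounded_op U" and C: "finite C"
  shows "U (chi C g) x = (\<Sum>z\<in>C. g z * entry U x z)"
proof -
  have mem: "\<forall>z\<in>C. (\<lambda>w. g z * delta z w) \<in> l2" by (intro ballI conjunct1[OF l2_scale[OF delta_l2[THEN conjunct1]]])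
  have "U (chi C g) = (\<lambda>w. \<Sum>z\<in>C. U (\<lambda>w. g z * delta z w) w)"
    unfolding chi_decomp[OF C] by (rule conjunct2[OF bo_sum[OF U C mem]])
  also have "\<dots> = (\<lambda>w. \<Sum>z\<in>C. g z * U (delta z) w)"
    by (rule ext, rule sum.cong) (simp_all add: lb_scale[OF bounded_lb[OF U] delta_l2[THEN conjunct1]])
  finally show ?thesis by (simp add: entry_def)
qed

lemma sum_bound: assumes U: "bounded_op U" and C: "finite C" "card C \<le> N"
  and K: "\<And>z. z \<in> C \<Longrightarrow> cmod (g z) * cmod (entry U x z) \<le> K" "K \<ge> 0"
  shows "cmod (U (chi C g) x) \<le> real N * K"
proof -
  have "cmod (U (chi C g) x) = cmod (\<Sum>z\<in>C. g z * entry U x z)" by (simp add: entry_sum[OF U C(1)])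
  also have "\<dots> \<le> (\<Sum>z\<in>C. cmod (g z * entry U x z))" by (rule norm_sum)
  also have "\<dots> \<le> (\<Sum>z\<in>C. K)" by (rule sum_mono) (simp add: norm_mult K(1))
  also have "\<dots> = real (card C) * K" by simp
  also have "\<dots> \<le> real N * K" using C(2) K(2) by (intro mult_right_mono) simp_all
  finally show ?thesis .
qed

lemma bgD: assumes "bounded_geometry TYPE('a::metric_space)" "R > 0"
  obtains N where "\<And>x::'a. finite (ball x R)" "\<And>x::'a. card (ball x R) \<le> N"
proof -
  from assms(1)[unfolded bounded_geometry_def, rule_format, OF assms(2)]
  obtain N where N: "\<forall>x::'a. finite (cball x R) \<and> card (cball x R) \<le> N" by (elim exE)
  have "finite (ball x R)" for x :: 'a using N finite_subset[OF ball_subset_cball] by blast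
  moreover have "card (ball x R) \<le> N" for x :: 'a
    using N card_mono[OF _ ball_subset_cball, of x R] by (meson order.trans)
  ultimately show ?thesis using that by blast
qed

lemma bounded_nbhd: assumes "bounded (B::'a::metric_space set)" shows "bounded (B \<union> {x. \<exists>b\<in>B. dist x b < R})"
proof -
  from assms obtain c e where ce: "\<forall>y\<in>B. dist c y \<le> e" unfolding bounded_def by blast
  have "{x. \<exists>b\<in>B. dist x b < R} \<subseteq> cball c (e + R)"
  proof
    fix x assume "x \<in> {x. \<exists>b\<in>B. dist x b < R}"
    then obtain b where b: "b \<in> B" "dist x b < R" by blast
    have "dist c x \<le> dist c b + dist b x" by (rule dist_triangle)
    moreover have "dist c b \<le> e" using ce b(1) by blast
    ultimately show "x \<in> cball c (e + R)" using b(2) by (simp add: dist_commute)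
  qed
  then have "bounded {x. \<exists>b\<in>B. dist x b < R}" by (rule bounded_subset[OF bounded_cball])
  then show ?thesis using assms by (simp add: bounded_Un)
qed

lemma third_bound: assumes "e > 0" "(a::real) \<ge> 0"
  shows "(e / (3 * (a + 1))) * a \<le> e / 3" "e / (3 * (a + 1)) > 0"
proof -
  have "(e / (3 * (a + 1))) * a = (e/3) * (a / (a + 1))" by simp
  also have "\<dots> \<le> (e/3) * 1" using assms by (intro mult_left_mono) simp_all
  finally show "(e / (3 * (a + 1))) * a \<le> e / 3" by simp
  show "e / (3 * (a + 1)) > 0" using assms by (intro divide_pos_pos) simp_all
qed

lemma ghost_left:
  assumes bg: "bounded_geometry TYPE('a::metric_space)"
    and S: "bounded_op (S::'a op)" "quasi_local S" and T: "bounded_op T" "ghost_op T"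
  shows "ghost_op (S \<circ> T)"
proof (rule ghostI)
  fix \<epsilon> :: real assume e: "\<epsilon> > 0"
  have S0: "op_norm S \<ge> 0" and T0: "op_norm T \<ge> 0"
    using op_norm_nonneg[OF bounded_lb[OF S(1)]] op_norm_nonneg[OF bounded_lb[OF T(1)]] .
  define e1 where "e1 = \<epsilon> / (3 * (op_norm T + 1))"
  have e1: "e1 * op_norm T \<le> \<epsilon>/3" "e1 > 0" using third_bound[OF e T0] unfolding e1_def by auto
  obtain R where R: "R > 0" "\<And>A B. (\<forall>a\<in>A. \<forall>b\<in>B. R \<le> dist a b) \<Longrightarrow> op_norm (chi A \<circ> S \<circ> chi B) \<le> e1"
    using qlD[OF S(2) e1(2)] by auto
  obtain N where N: "\<And>x::'a. finite (ball x R)" "\<And>x::'a. card (ball x R) \<le> N"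
    using bgD[OF bg R(1)] by auto
  have NS0: "real N * op_norm S \<ge> 0" using S0 by simp
  define e2 where "e2 = \<epsilon> / (3 * (real N * op_norm S + 1))"
  have e2: "e2 * (real N * op_norm S) \<le> \<epsilon>/3" "e2 > 0" using third_bound[OF e NS0] unfolding e2_def by auto
  obtain B where B: "bounded B" "\<And>x y. x \<notin> B \<Longrightarrow> y \<notin> B \<Longrightarrow> cmod (entry T x y) < e2"
    using ghostD[OF T(2) e2(2)] by auto
  define B' where "B' = B \<union> {x. \<exists>b\<in>B. dist x b < R}"
  have "cmod (entry (S \<circ> T) x y) < \<epsilon>" if xy: "x \<notin> B'" "y \<notin> B'" for x y
  proof -
    define g where "g = T (delta y)"
    define C where "C = ball x R"
    have g: "g \<in> l2" unfolding g_def by (rule lb_mem[OF bounded_lb[OF T(1)] delta_l2[THEN conjunct1]])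
    have hC: "chi C g \<in> l2" and hC': "chi (-C) g \<in> l2" using l2_chi[OF g] by simp_all
    have gsplit: "g = (\<lambda>x. chi C g x + chi (-C) g x)" by (simp add: chi_def fun_eq_iff)
    have "S g = (\<lambda>x. S (chi C g) x + S (chi (-C) g) x)"
      by (subst gsplit) (rule bo_add_apply[OF S(1) hC hC'])
    then have eq: "entry (S \<circ> T) x y = S (chi C g) x + S (chi (-C) g) x"
      unfolding entry_def g_def by simp
    have gn: "l2_norm g \<le> op_norm T" unfolding g_def
      by (rule op_norm_ub[OF bounded_lb[OF T(1)] delta_l2[THEN conjunct1]]) (simp add: delta_l2)
    have far: "\<forall>a\<in>{x}. \<forall>b\<in>-C. R \<le> dist a b" unfolding C_def by (auto simp: not_less)
    have t2: "cmod (S (chi (-C) g) x) \<le> e1 * op_norm T"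
    proof -
      have "S (chi (-C) g) x = (chi {x} \<circ> S \<circ> chi (-C)) g x" by (simp add: chi_def)
      then have "cmod (S (chi (-C) g) x) \<le> l2_norm ((chi {x} \<circ> S \<circ> chi (-C)) g)"
        using l2_pt[OF lb_mem[OF lb_chi[OF bounded_lb[OF S(1)]] g]] by simp
      also have "\<dots> \<le> op_norm (chi {x} \<circ> S \<circ> chi (-C)) * l2_norm g"
        by (rule op_norm_bound[OF lb_chi[OF bounded_lb[OF S(1)]] g])
      also have "\<dots> \<le> e1 * op_norm T"
        by (rule mult_mono[OF R(2)[OF far] gn]) (simp_all add: e1 less_imp_le l2_norm_nonneg)
      finally show ?thesis .
    qed
    have t1: "cmod (S (chi C g) x) \<le> real N * (e2 * op_norm S)"
    proof (rule sum_bound[OF S(1)])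
      show "finite C" "card C \<le> N" unfolding C_def using N by auto
      show "0 \<le> e2 * op_norm S" using e2 S0 by simp
      fix z assume z: "z \<in> C"
      have zB: "z \<notin> B"
      proof
        assume "z \<in> B"
        then have "x \<in> B'" using z unfolding C_def B'_def by auto
        then show False using xy by simp
      qed
      have yB: "y \<notin> B" using xy unfolding B'_def by simp
      have "cmod (g z) < e2" unfolding g_def using B(2)[OF zB yB] by (simp add: entry_def)
      moreover have "cmod (entry S x z) \<le> op_norm S" by (rule entry_bound[OF bounded_lb[OF S(1)]])
      ultimately show "cmod (g z) * cmod (entry S x z) \<le> e2 * op_norm S"
        by (intro mult_mono) (simp_all add: S0 less_imp_le e2(2))
    qed
    have "cmod (entry (S \<circ> T) x y) \<le> cmod (S (chi C g) x) + cmod (S (chi (-C) g) x)"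
      unfolding eq by (rule norm_triangle_ineq)
    also have "\<dots> \<le> real N * (e2 * op_norm S) + e1 * op_norm T" using t1 t2 by simp
    also have "\<dots> \<le> \<epsilon>/3 + \<epsilon>/3" using e1 e2 by (simp add: algebra_simps)
    also have "\<dots> < \<epsilon>" using e by simp
    finally show ?thesis .
  qed
  then show "\<exists>B. bounded B \<and> (\<forall>x y. x \<notin> B \<and> y \<notin> B \<longrightarrow> cmod (entry (S \<circ> T) x y) < \<epsilon>)"
    using bounded_nbhd[OF B(1), of R] unfolding B'_def by (intro exI[of _ B']) (auto simp: B'_def)
qed


lemma ghost_right:
  assumes bg: "bounded_geometry TYPE('a::metric_space)"
    and S: "bounded_op (S::'a op)" "quasi_local S" and T: "bounded_op T" "ghost_op T"
  shows "ghost_op (T \<circ> S)"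
proof (rule ghostI)
  fix \<epsilon> :: real assume e: "\<epsilon> > 0"
  have S0: "op_norm S \<ge> 0" and T0: "op_norm T \<ge> 0"
    using op_norm_nonneg[OF bounded_lb[OF S(1)]] op_norm_nonneg[OF bounded_lb[OF T(1)]] .
  define e1 where "e1 = \<epsilon> / (3 * (op_norm T + 1))"
  have e1: "e1 * op_norm T \<le> \<epsilon>/3" "e1 > 0" using third_bound[OF e T0] unfolding e1_def by auto
  obtain R where R: "R > 0" "\<And>A B. (\<forall>a\<in>A. \<forall>b\<in>B. R \<le> dist a b) \<Longrightarrow> op_norm (chi A \<circ> S \<circ> chi B) \<le> e1"
    using qlD[OF S(2) e1(2)] by auto
  obtain N where N: "\<And>x::'a. finite (ball x R)" "\<And>x::'a. card (ball x R) \<le> N"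
    using bgD[OF bg R(1)] by auto
  have NS0: "real N * op_norm S \<ge> 0" using S0 by simp
  define e2 where "e2 = \<epsilon> / (3 * (real N * op_norm S + 1))"
  have e2: "e2 * (real N * op_norm S) \<le> \<epsilon>/3" "e2 > 0" using third_bound[OF e NS0] unfolding e2_def by auto
  obtain B where B: "bounded B" "\<And>x y. x \<notin> B \<Longrightarrow> y \<notin> B \<Longrightarrow> cmod (entry T x y) < e2"
    using ghostD[OF T(2) e2(2)] by auto
  define B' where "B' = B \<union> {x. \<exists>b\<in>B. dist x b < R}"
  have "cmod (entry (T \<circ> S) x y) < \<epsilon>" if xy: "x \<notin> B'" "y \<notin> B'" for x y
  proof -
    define g where "g = S (delta y)"
    define C where "C = ball y R"
    have g: "g \<in> l2" unfolding g_def by (rule lb_mem[OF bounded_lb[OF S(1)] delta_l2[THEN conjunct1]])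
    have hC: "chi C g \<in> l2" and hC': "chi (-C) g \<in> l2" using l2_chi[OF g] by simp_all
    have gsplit: "g = (\<lambda>x. chi C g x + chi (-C) g x)" by (simp add: chi_def fun_eq_iff)
    have "T g = (\<lambda>x. T (chi C g) x + T (chi (-C) g) x)"
      by (subst gsplit) (rule bo_add_apply[OF T(1) hC hC'])
    then have eq: "entry (T \<circ> S) x y = T (chi C g) x + T (chi (-C) g) x"
      unfolding entry_def g_def by simp
    have far: "\<forall>a\<in>-C. \<forall>b\<in>{y}. R \<le> dist a b" unfolding C_def by (auto simp: not_less dist_commute)
    have t2: "cmod (T (chi (-C) g) x) \<le> e1 * op_norm T"
    proof -
      have dy: "chi {y} (delta y) = delta y" by (auto simp: chi_def delta_def fun_eq_iff)
      have cg: "chi (-C) g = (chi (-C) \<circ> S \<circ> chi {y}) (delta y)" unfolding g_def by (simp add: dy)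
      have cgn: "l2_norm (chi (-C) g) \<le> e1"
      proof -
        have "l2_norm (chi (-C) g) \<le> op_norm (chi (-C) \<circ> S \<circ> chi {y})" unfolding cg
          by (rule op_norm_ub[OF lb_chi[OF bounded_lb[OF S(1)]] delta_l2[THEN conjunct1]]) (simp add: delta_l2)
        then show ?thesis using R(2)[OF far] by simp
      qed
      have "cmod (T (chi (-C) g) x) \<le> l2_norm (T (chi (-C) g))"
        by (rule l2_pt[OF lb_mem[OF bounded_lb[OF T(1)] hC']])
      also have "\<dots> \<le> op_norm T * l2_norm (chi (-C) g)"
        by (rule op_norm_bound[OF bounded_lb[OF T(1)] hC'])
      also have "\<dots> \<le> op_norm T * e1" by (rule mult_left_mono[OF cgn T0])
      finally show ?thesis by (simp add: mult.commute)
    qed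
    have t1: "cmod (T (chi C g) x) \<le> real N * (e2 * op_norm S)"
    proof (rule sum_bound[OF T(1)])
      show "finite C" "card C \<le> N" unfolding C_def using N by auto
      show "0 \<le> e2 * op_norm S" using e2 S0 by simp
      fix z assume z: "z \<in> C"
      have zB: "z \<notin> B"
      proof
        assume "z \<in> B"
        then have "y \<in> B'" using z unfolding C_def B'_def by auto
        then show False using xy by simp
      qed
      have xB: "x \<notin> B" using xy unfolding B'_def by simp
      have "cmod (entry T x z) < e2" using B(2)[OF xB zB] .
      moreover have "cmod (g z) \<le> op_norm S" unfolding g_def
        using entry_bound[OF bounded_lb[OF S(1)], of z y] by (simp add: entry_def)
      ultimately show "cmod (g z) * cmod (entry T x z) \<le> e2 * op_norm S"
        by (subst mult.commute, intro mult_mono) (simp_all add: S0 less_imp_le e2(2))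
    qed
    have "cmod (entry (T \<circ> S) x y) \<le> cmod (T (chi C g) x) + cmod (T (chi (-C) g) x)"
      unfolding eq by (rule norm_triangle_ineq)
    also have "\<dots> \<le> real N * (e2 * op_norm S) + e1 * op_norm T" using t1 t2 by simp
    also have "\<dots> \<le> \<epsilon>/3 + \<epsilon>/3" using e1 e2 by (simp add: algebra_simps)
    also have "\<dots> < \<epsilon>" using e by simp
    finally show ?thesis .
  qed
  then show "\<exists>B. bounded B \<and> (\<forall>x y. x \<notin> B \<and> y \<notin> B \<longrightarrow> cmod (entry (T \<circ> S) x y) < \<epsilon>)"
    using bounded_nbhd[OF B(1), of R] unfolding B'_def by (intro exI[of _ B']) (auto simp: B'_def)
qed

lemma gi_iff: "T \<in> ghost_ideal \<longleftrightarrow> bounded_op T \<and> quasi_local T \<and> ghost_op T"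
  by (simp add: ghost_ideal_def C_uq_def)

lemma cuq_iff: "T \<in> C_uq \<longleftrightarrow> bounded_op T \<and> quasi_local T"
  by (simp add: C_uq_def)

theorem lemma5p4:
  assumes "bounded_geometry TYPE('a::metric_space)"
  shows "(ghost_ideal :: 'a op set) \<subseteq> C_uq
    \<and> (\<lambda>f x. 0) \<in> (ghost_ideal :: 'a op set)
    \<and> (\<forall>S\<in>(ghost_ideal :: 'a op set). \<forall>T\<in>ghost_ideal.
          (\<lambda>f x. S f x + T f x) \<in> ghost_ideal)
    \<and> (\<forall>T\<in>(ghost_ideal :: 'a op set). \<forall>c::complex.
          (\<lambda>f x. c * T f x) \<in> ghost_ideal)
    \<and> (\<forall>T\<in>(ghost_ideal :: 'a op set). \<forall>S\<in>C_uq.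
          S \<circ> T \<in> ghost_ideal \<and> T \<circ> S \<in> ghost_ideal)
    \<and> (\<forall>T\<in>(C_uq :: 'a op set).
          (\<forall>\<epsilon>>0. \<exists>S\<in>ghost_ideal. op_norm (\<lambda>f x. T f x - S f x) < \<epsilon>)
          \<longrightarrow> T \<in> ghost_ideal)"
proof (intro conjI ballI allI impI)
  show "(ghost_ideal :: 'a op set) \<subseteq> C_uq" by (auto simp: ghost_ideal_def)
  show "(\<lambda>f x. 0) \<in> (ghost_ideal :: 'a op set)"
    unfolding gi_iff using bo_zero ql_zero ghost_zero by blast
next
  fix S T :: "'a op" assume "S \<in> ghost_ideal" "T \<in> ghost_ideal"
  then show "(\<lambda>f x. S f x + T f x) \<in> ghost_ideal"
    unfolding gi_iff using bo_add ql_add ghost_add by blast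
next
  fix T :: "'a op" and c :: complex assume "T \<in> ghost_ideal"
  then show "(\<lambda>f x. c * T f x) \<in> ghost_ideal"
    unfolding gi_iff using bo_scale ql_scale ghost_scale by blast
next
  fix T S :: "'a op" assume T: "T \<in> ghost_ideal" and S: "S \<in> C_uq"
  then have Tb: "bounded_op T" "quasi_local T" "ghost_op T" and Sb: "bounded_op S" "quasi_local S"
    unfolding gi_iff cuq_iff by auto
  show "S \<circ> T \<in> ghost_ideal" unfolding gi_iff
    using bo_comp[OF Sb(1) Tb(1)] ql_comp[OF Sb Tb(1,2)] ghost_left[OF assms Sb Tb(1,3)] by blast
  show "T \<circ> S \<in> ghost_ideal" unfolding gi_iff
    using bo_comp[OF Tb(1) Sb(1)] ql_comp[OF Tb(1,2) Sb] ghost_right[OF assms Sb Tb(1,3)] by blast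
next
  fix T :: "'a op" assume T: "T \<in> C_uq"
    and approx: "\<forall>\<epsilon>>0. \<exists>S\<in>ghost_ideal. op_norm (\<lambda>f x. T f x - S f x) < \<epsilon>"
  then have Tb: "bounded_op T" "quasi_local T" unfolding cuq_iff by auto
  show "T \<in> ghost_ideal" unfolding gi_iff using Tb ghost_closed[OF Tb(1) approx] by blast
qed

end
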